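(* Let $f$ be a piecewise contracting interval map satisfying the separation property, let $x\in\widetilde X$ and let $\theta$ be its itinerary. Then there exist $m_0\geqslant 1$ and a number $\beta(x)$ such that \[ p(\theta,n)=n\,\#\Delta_{lr}(x)+\beta(x)\qquad\forall\, n\geqslant m_0, \] and \[ p(\theta,1)-\#\Delta_{lr}(x)\leqslant\beta(x)\leqslant p(\theta,1)-\#\Delta+m_0\big(\#\Delta-\#\Delta_{lr}(x)\big). \]
   Context: Let $X$ be a compact interval of $\mathbb{R}$ and $X_1<X_2<\dots<X_N$ ($N\geqslant 2$) be non-empty pairwise disjoint intervals, open in $X$, with $X=\bigcup_{i}\overline{X_i}$. Let $\Delta:=\{x\in\overline{X_i}\cap\overline{X_j}: i\neq j\}$; so $\Delta=\{c_1,\dots,c_{N-1}\}$ with $\{c_i\}=\overline{X_i}\cap\overline{X_{i+1}}$. A piecewise contracting interval map is a map $f:X\to X$ discontinuous at every point of $\Delta$ for which there is $\lambda\in(0,1)$ with $|f(x)-f(y)|\leqslant\lambda|x-y|$ whenever $x,y$ lie in the same $X_i$; let $f_i:\overline{X_i}\to X$ be the continuous extension of $f|_{X_i}$. Separation property: each $f_i$ is injective and $f_i(\overline{X_i})\cap f_j(\overline{X_j})=\emptyset$ for $i\neq j$. $\widetilde X:=\bigcap_{n\geqslant 0}f^{-n}(X\setminus\Delta)$ (assumed non-empty); the itinerary of $x\in\widetilde X$ is $\theta\in\{1,\dots,N\}^{\mathbb{N}}$ with $\theta_t=i$ iff $f^t(x)\in X_i$. $L_n(\theta):=\{\theta_t\dots\theta_{t+n-1}:t\geqslant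 0\}$, $p(\theta,n):=\#L_n(\theta)$. Atoms: for $A\subset X$ let $F_i(A):=\overline{f(A\cap X_i)}$; for $(i_1,\dots,i_n)\in\{1,\dots,N\}^n$ the set $A_{i_1\dots i_n}:=F_{i_n}\circ\dots\circ F_{i_1}(X)$ is an atom of generation $n$ if it is non-empty; $\mathcal{A}_n$ is the set of atoms of generation $n$, and for $x\in X$, $\mathcal{A}_n(x):=\{A\in\mathcal{A}_n:\exists t\in\mathbb{N},\ f^{t+n}(x)\in A\}$. For $c=c_i\in\Delta$ and $n\geqslant 1$, $c$ is $n$-left-right visited by the orbit of $x$ if there exists $A\in\mathcal{A}_n(x)$ with $c\in A$, such that $f^{t+n}(x)\in A\cap X_i$ for some $t\in\mathbb{N}$ and $f^{t'+n}(x)\in A\cap X_{i+1}$ for some $t'\in\mathbb{N}$. $\Delta^n_{lr}(x)$ is the set of such discontinuities, and $\Delta_{lr}(x):=\bigcap_{n\geqslant1}\Delta^n_{lr}(x)$ (the discontinuities that are left-right recurrently visited). *)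

theory Defs
  imports "HOL-Analysis.Analysis"
begin

definition pc_interval_map ::
  "real set \<Rightarrow> nat \<Rightarrow> (nat \<Rightarrow> real set) \<Rightarrow> (real \<Rightarrow> real) \<Rightarrow> (nat \<Rightarrow> real \<Rightarrow> real) \<Rightarrow> bool" where
  "pc_interval_map X N Xs f fe \<longleftrightarrow>
     compact X \<and> is_interval X \<and> N \<ge> 2 \<and>
     (\<forall>i\<in>{1..N}. Xs i \<noteq> {} \<and> is_interval (Xs i) \<and> openin (top_of_set X) (Xs i)) \<and>
     (\<forall>i\<in>{1..N}. \<forall>j\<in>{1..N}. i \<noteq> j \<longrightarrow> Xs i \<inter> Xs j = {}) \<and>
     (\<forall>i\<in>{1..N}. \<forall>j\<in>{1..N}. i < j \<longrightarrow> (\<forall>x\<in>Xs i. \<forall>y\<in>Xs j. x < y)) \<and>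
     X = (\<Union>i\<in>{1..N}. closure (Xs i)) \<and>
     f ` X \<subseteq> X \<and>
     (\<exists>lam::real. 0 < lam \<and> lam < 1 \<and>
        (\<forall>i\<in>{1..N}. \<forall>x\<in>Xs i. \<forall>y\<in>Xs i. \<bar>f x - f y\<bar> \<le> lam * \<bar>x - y\<bar>)) \<and>
     (\<forall>i\<in>{1..N}. continuous_on (closure (Xs i)) (fe i) \<and> (\<forall>x\<in>Xs i. fe i x = f x))"

definition disc_set :: "nat \<Rightarrow> (nat \<Rightarrow> real set) \<Rightarrow> real set" where
  "disc_set N Xs = {x. \<exists>i\<in>{1..N}. \<exists>j\<in>{1..N}. i \<noteq> j \<and> x \<in> closure (Xs i) \<inter> closure (Xs j)}"

definition pc_discontinuous :: "real set \<Rightarrow> nat \<Rightarrow> (nat \<Rightarrow> real set) \<Rightarrow> (real \<Rightarrow> real) \<Rightarrow> bool" where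
  "pc_discontinuous X N Xs f \<longleftrightarrow> (\<forall>c\<in>disc_set N Xs. \<not> continuous (at c within X) f)"

definition separation_property :: "nat \<Rightarrow> (nat \<Rightarrow> real set) \<Rightarrow> (nat \<Rightarrow> real \<Rightarrow> real) \<Rightarrow> bool" where
  "separation_property N Xs fe \<longleftrightarrow>
     (\<forall>i\<in>{1..N}. inj_on (fe i) (closure (Xs i))) \<and>
     (\<forall>i\<in>{1..N}. \<forall>j\<in>{1..N}. i \<noteq> j \<longrightarrow>
        fe i ` closure (Xs i) \<inter> fe j ` closure (Xs j) = {})"

definition Xtilde :: "real set \<Rightarrow> nat \<Rightarrow> (nat \<Rightarrow> real set) \<Rightarrow> (real \<Rightarrow> real) \<Rightarrow> real set" where
  "Xtilde X N Xs f = (\<Inter>n. {x\<in>X. (f ^^ n) x \<in> X - disc_set N Xs})"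

definition is_itinerary :: "nat \<Rightarrow> (nat \<Rightarrow> real set) \<Rightarrow> (real \<Rightarrow> real) \<Rightarrow> real \<Rightarrow> (nat \<Rightarrow> nat) \<Rightarrow> bool" where
  "is_itinerary N Xs f x \<theta> \<longleftrightarrow>
     (\<forall>t. \<theta> t \<in> {1..N} \<and> (\<forall>i\<in>{1..N}. \<theta> t = i \<longleftrightarrow> (f ^^ t) x \<in> Xs i))"

definition lang :: "(nat \<Rightarrow> nat) \<Rightarrow> nat \<Rightarrow> nat list set" where
  "lang \<theta> n = {map (\<lambda>k. \<theta> (t + k)) [0..<n] | t. True}"

definition complexity :: "(nat \<Rightarrow> nat) \<Rightarrow> nat \<Rightarrow> nat" where
  "complexity \<theta> n = card (lang \<theta> n)"

definition Fmap :: "(nat \<Rightarrow> real set) \<Rightarrow> (real \<Rightarrow> real) \<Rightarrow> nat \<Rightarrow> real set \<Rightarrow> real set" where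
  "Fmap Xs f i A = closure (f ` (A \<inter> Xs i))"

definition atom :: "real set \<Rightarrow> (nat \<Rightarrow> real set) \<Rightarrow> (real \<Rightarrow> real) \<Rightarrow> nat list \<Rightarrow> real set" where
  "atom X Xs f w = foldl (\<lambda>A i. Fmap Xs f i A) X w"

definition atoms :: "real set \<Rightarrow> nat \<Rightarrow> (nat \<Rightarrow> real set) \<Rightarrow> (real \<Rightarrow> real) \<Rightarrow> nat \<Rightarrow> real set set" where
  "atoms X N Xs f n = {atom X Xs f w | w. length w = n \<and> set w \<subseteq> {1..N} \<and> atom X Xs f w \<noteq> {}}"

definition atoms_of :: "real set \<Rightarrow> nat \<Rightarrow> (nat \<Rightarrow> real set) \<Rightarrow> (real \<Rightarrow> real) \<Rightarrow> nat \<Rightarrow> real \<Rightarrow> real set set" where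
  "atoms_of X N Xs f n x = {A \<in> atoms X N Xs f n. \<exists>t. (f ^^ (t + n)) x \<in> A}"

definition Delta_lr_n :: "real set \<Rightarrow> nat \<Rightarrow> (nat \<Rightarrow> real set) \<Rightarrow> (real \<Rightarrow> real) \<Rightarrow> nat \<Rightarrow> real \<Rightarrow> real set" where
  "Delta_lr_n X N Xs f n x = {c \<in> disc_set N Xs. \<exists>i. 1 \<le> i \<and> i < N \<and>
      c \<in> closure (Xs i) \<inter> closure (Xs (Suc i)) \<and>
      (\<exists>A\<in>atoms_of X N Xs f n x. c \<in> A \<and>
         (\<exists>t. (f ^^ (t + n)) x \<in> A \<inter> Xs i) \<and>
         (\<exists>t'. (f ^^ (t' + n)) x \<in> A \<inter> Xs (Suc i)))}"

definition Delta_lr :: "real set \<Rightarrow> nat \<Rightarrow> (nat \<Rightarrow> real set) \<Rightarrow> (real \<Rightarrow> real) \<Rightarrow> real \<Rightarrow> real set" where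
  "Delta_lr X N Xs f x = (\<Inter>n\<in>{1..}. Delta_lr_n X N Xs f n x)"

end

theory Submission
  imports Defs
begin

locale pcm =
  fixes X :: "real set" and N :: nat and Xs :: "nat \<Rightarrow> real set"
    and f :: "real \<Rightarrow> real" and fe :: "nat \<Rightarrow> real \<Rightarrow> real"
    and x :: real and \<theta> :: "nat \<Rightarrow> nat"
  assumes pc: "pc_interval_map X N Xs f fe"
    and sep: "separation_property N Xs fe"
    and xt: "x \<in> Xtilde X N Xs f"
    and itin: "is_itinerary N Xs f x \<theta>"
begin

lemma pcc: "compact X \<and> is_interval X \<and> N \<ge> 2 \<and>
     (\<forall>i\<in>{1..N}. Xs i \<noteq> {} \<and> is_interval (Xs i) \<and> openin (top_of_set X) (Xs i)) \<and>
     (\<forall>i\<in>{1..N}. \<forall>j\<in>{1..N}. i \<noteq> j \<longrightarrow> Xs i \<inter> Xs j = {}) \<and>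
     (\<forall>i\<in>{1..N}. \<forall>j\<in>{1..N}. i < j \<longrightarrow> (\<forall>x\<in>Xs i. \<forall>y\<in>Xs j. x < y)) \<and>
     X = (\<Union>i\<in>{1..N}. closure (Xs i)) \<and>
     f ` X \<subseteq> X \<and>
     (\<exists>lam::real. 0 < lam \<and> lam < 1 \<and>
        (\<forall>i\<in>{1..N}. \<forall>x\<in>Xs i. \<forall>y\<in>Xs i. \<bar>f x - f y\<bar> \<le> lam * \<bar>x - y\<bar>)) \<and>
     (\<forall>i\<in>{1..N}. continuous_on (closure (Xs i)) (fe i) \<and> (\<forall>x\<in>Xs i. fe i x = f x))"
  using pc unfolding pc_interval_map_def .

lemma X_compact: "compact X" using pcc by (elim conjE)
lemma X_int: "is_interval X" using pcc by (elim conjE)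
lemma N2: "N \<ge> 2" using pcc by (elim conjE)
lemma P4: "\<forall>i\<in>{1..N}. Xs i \<noteq> {} \<and> is_interval (Xs i) \<and> openin (top_of_set X) (Xs i)"
  using pcc by (elim conjE)
lemma P5: "\<forall>i\<in>{1..N}. \<forall>j\<in>{1..N}. i \<noteq> j \<longrightarrow> Xs i \<inter> Xs j = {}"
  using pcc by (elim conjE)
lemma P6: "\<forall>i\<in>{1..N}. \<forall>j\<in>{1..N}. i < j \<longrightarrow> (\<forall>x\<in>Xs i. \<forall>y\<in>Xs j. x < y)"
  using pcc by (elim conjE)
lemma P10: "\<forall>i\<in>{1..N}. continuous_on (closure (Xs i)) (fe i) \<and> (\<forall>x\<in>Xs i. fe i x = f x)"
  using pcc by (elim conjE)
lemma Xs_ne: "i \<in> {1..N} \<Longrightarrow> Xs i \<noteq> {}" using P4 by blast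
lemma Xs_int: "i \<in> {1..N} \<Longrightarrow> is_interval (Xs i)" using P4 by blast
lemma Xs_open: "i \<in> {1..N} \<Longrightarrow> openin (top_of_set X) (Xs i)" using P4 by blast
lemma Xs_disj: "i \<in> {1..N} \<Longrightarrow> j \<in> {1..N} \<Longrightarrow> i \<noteq> j \<Longrightarrow> Xs i \<inter> Xs j = {}"
  using P5 by blast
lemma Xs_ord: "i \<in> {1..N} \<Longrightarrow> j \<in> {1..N} \<Longrightarrow> i < j \<Longrightarrow> y \<in> Xs i \<Longrightarrow> z \<in> Xs j \<Longrightarrow> y < z"
  using P6 by blast
lemma X_union: "X = (\<Union>i\<in>{1..N}. closure (Xs i))" using pcc by (elim conjE)
lemma fX: "f ` X \<subseteq> X" using pcc by (elim conjE)
lemma fe_cont: "i \<in> {1..N} \<Longrightarrow> continuous_on (closure (Xs i)) (fe i)" using P10 by blast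
lemma fe_eq: "i \<in> {1..N} \<Longrightarrow> y \<in> Xs i \<Longrightarrow> fe i y = f y" using P10 by blast

lemma lam_ex: "\<exists>lam::real. 0 < lam \<and> lam < 1 \<and>
        (\<forall>i\<in>{1..N}. \<forall>y\<in>Xs i. \<forall>z\<in>Xs i. \<bar>f y - f z\<bar> \<le> lam * \<bar>y - z\<bar>)"
  using pcc by (elim conjE)

definition lam where "lam = (SOME lam::real. 0 < lam \<and> lam < 1 \<and>
        (\<forall>i\<in>{1..N}. \<forall>y\<in>Xs i. \<forall>z\<in>Xs i. \<bar>f y - f z\<bar> \<le> lam * \<bar>y - z\<bar>))"

lemma lam: "0 < lam" "lam < 1"
  "i \<in> {1..N} \<Longrightarrow> y \<in> Xs i \<Longrightarrow> z \<in> Xs i \<Longrightarrow> \<bar>f y - f z\<bar> \<le> lam * \<bar>y - z\<bar>"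
  using someI_ex[OF lam_ex] unfolding lam_def by blast+

lemma sep_inj: "i \<in> {1..N} \<Longrightarrow> inj_on (fe i) (closure (Xs i))"
  and sep_disj: "i \<in> {1..N} \<Longrightarrow> j \<in> {1..N} \<Longrightarrow> i \<noteq> j \<Longrightarrow>
        fe i ` closure (Xs i) \<inter> fe j ` closure (Xs j) = {}"
  using sep unfolding separation_property_def by blast+

lemma XsX: "i \<in> {1..N} \<Longrightarrow> Xs i \<subseteq> X"
  using openin_subset[OF Xs_open] by auto

lemma X_closed: "closed X" and X_bdd: "bounded X"
  using X_compact compact_imp_closed compact_imp_bounded by auto

lemma closure_XsX: "i \<in> {1..N} \<Longrightarrow> closure (Xs i) \<subseteq> X"
  using X_union by blast

lemma f_cont: "i \<in> {1..N} \<Longrightarrow> continuous_on (Xs i) f"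
proof -
  assume i: "i \<in> {1..N}"
  have "continuous_on (Xs i) (fe i)"
    by (rule continuous_on_subset[OF fe_cont[OF i] closure_subset])
  then show ?thesis using fe_eq[OF i] continuous_on_cong by metis
qed

lemma orbit_X: "(f ^^ t) x \<in> X"
  using xt unfolding Xtilde_def by blast

lemma orbit_nd: "(f ^^ t) x \<notin> disc_set N Xs"
  using xt unfolding Xtilde_def by blast

lemma theta_range: "\<theta> t \<in> {1..N}"
  and theta_iff: "i \<in> {1..N} \<Longrightarrow> \<theta> t = i \<longleftrightarrow> (f ^^ t) x \<in> Xs i"
  using itin unfolding is_itinerary_def by blast+

lemma orbit_Xs: "(f ^^ t) x \<in> Xs (\<theta> t)"
  using theta_iff[OF theta_range] by blast

lemma X_two: "\<exists>a b. a \<in> X \<and> b \<in> X \<and> a \<noteq> b"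
proof -
  have 1: "(1::nat) \<in> {1..N}" "(2::nat) \<in> {1..N}" using N2 by auto
  obtain a b where "a \<in> Xs 1" "b \<in> Xs 2" using Xs_ne 1 by blast
  moreover have "Xs 1 \<inter> Xs 2 = {}" using Xs_disj 1 by auto
  ultimately show ?thesis using XsX 1 by blast
qed

lemma Xs_two: "i \<in> {1..N} \<Longrightarrow> \<exists>a b. a \<in> Xs i \<and> b \<in> Xs i \<and> a < b"
proof (rule ccontr)
  assume i: "i \<in> {1..N}" and n: "\<not> (\<exists>a b. a \<in> Xs i \<and> b \<in> Xs i \<and> a < b)"
  obtain p where p: "p \<in> Xs i" using Xs_ne[OF i] by blast
  have sing: "Xs i = {p}"
  proof
    show "Xs i \<subseteq> {p}"
    proof
      fix q assume "q \<in> Xs i"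
      then show "q \<in> {p}" using n p by (metis linorder_neq_iff singletonI)
    qed
  qed (use p in auto)
  have "connected X" using X_int is_interval_connected_1 by auto
  moreover have "openin (top_of_set X) {p}" using Xs_open[OF i] sing by simp
  moreover have "closedin (top_of_set X) {p}"
  proof -
    have "p \<in> X" using p XsX[OF i] by blast
    then show ?thesis by (simp add: closed_subset)
  qed
  ultimately have "{p} = X" unfolding connected_clopen by blast
  then show False using X_two by blast
qed


lemma Xs_bdd: "i \<in> {1..N} \<Longrightarrow> bdd_above (Xs i)" "i \<in> {1..N} \<Longrightarrow> bdd_below (Xs i)"
  using bounded_subset[OF X_bdd XsX] bounded_imp_bdd_above bounded_imp_bdd_below by auto

lemma cl_bounds: "i \<in> {1..N} \<Longrightarrow> y \<in> closure (Xs i) \<Longrightarrow> y \<le> Sup (Xs i) \<and> Inf (Xs i) \<le> y"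
proof -
  assume i: "i \<in> {1..N}" and y: "y \<in> closure (Xs i)"
  have "Xs i \<subseteq> {..Sup (Xs i)}" using cSup_upper Xs_bdd[OF i] by auto
  then have "closure (Xs i) \<subseteq> {..Sup (Xs i)}" by (simp add: closure_minimal)
  moreover have "Xs i \<subseteq> {Inf (Xs i)..}" using cInf_lower Xs_bdd[OF i] by auto
  then have "closure (Xs i) \<subseteq> {Inf (Xs i)..}" by (simp add: closure_minimal)
  ultimately show ?thesis using y by auto
qed

lemma Sup_le_Inf: "i \<in> {1..N} \<Longrightarrow> j \<in> {1..N} \<Longrightarrow> i < j \<Longrightarrow> Sup (Xs i) \<le> Inf (Xs j)"
proof -
  assume i: "i \<in> {1..N}" and j: "j \<in> {1..N}" and ij: "i < j"
  have "\<forall>y\<in>Xs i. y \<le> Inf (Xs j)"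
    using Xs_ord[OF i j ij] Xs_ne[OF j] by (meson cInf_greatest less_imp_le)
  then show ?thesis using Xs_ne[OF i] by (meson cSup_least)
qed

lemma Inf_le_Sup: "i \<in> {1..N} \<Longrightarrow> Inf (Xs i) \<le> Sup (Xs i)"
  using Xs_ne Xs_bdd cInf_le_cSup by blast

lemma Sup_mono: "i \<in> {1..N} \<Longrightarrow> j \<in> {1..N} \<Longrightarrow> i \<le> j \<Longrightarrow> Sup (Xs i) \<le> Sup (Xs j)"
proof -
  assume i: "i \<in> {1..N}" and j: "j \<in> {1..N}" and ij: "i \<le> j"
  show ?thesis
  proof (cases "i = j")
    case False
    then have "Sup (Xs i) \<le> Inf (Xs j)" using Sup_le_Inf[OF i j] ij by auto
    then show ?thesis using Inf_le_Sup[OF j] by linarith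
  qed simp
qed

lemma Inf_mono: "i \<in> {1..N} \<Longrightarrow> j \<in> {1..N} \<Longrightarrow> i \<le> j \<Longrightarrow> Inf (Xs i) \<le> Inf (Xs j)"
proof -
  assume i: "i \<in> {1..N}" and j: "j \<in> {1..N}" and ij: "i \<le> j"
  show ?thesis
  proof (cases "i = j")
    case False
    then have "Sup (Xs i) \<le> Inf (Xs j)" using Sup_le_Inf[OF i j] ij by auto
    then show ?thesis using Inf_le_Sup[OF i] by linarith
  qed simp
qed

lemma gap: "j \<in> {1..<N} \<Longrightarrow> Sup (Xs j) = Inf (Xs (Suc j))"
proof (rule ccontr)
  assume j: "j \<in> {1..<N}" and ne: "Sup (Xs j) \<noteq> Inf (Xs (Suc j))"
  have j1: "j \<in> {1..N}" and j2: "Suc j \<in> {1..N}" using j by auto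
  define s where "s = Sup (Xs j)"
  define r where "r = Inf (Xs (Suc j))"
  have "s \<le> r" using Sup_le_Inf[OF j1 j2] s_def r_def by auto
  with ne have sr: "s < r" using s_def r_def by auto
  define m where "m = (s + r) / 2"
  obtain a where a: "a \<in> Xs j" using Xs_ne[OF j1] by blast
  obtain b where b: "b \<in> Xs (Suc j)" using Xs_ne[OF j2] by blast
  have "a \<le> s" using a cSup_upper Xs_bdd[OF j1] s_def by auto
  moreover have "r \<le> b" using b cInf_lower Xs_bdd[OF j2] r_def by auto
  ultimately have "a \<le> m" "m \<le> b" using sr m_def by auto
  moreover have "a \<in> X" "b \<in> X" using a b XsX[OF j1] XsX[OF j2] by auto
  ultimately have "m \<in> X" using X_int unfolding is_interval_1 by blast
  then obtain l where l: "l \<in> {1..N}" "m \<in> closure (Xs l)" using X_union by blast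
  show False
  proof (cases "l \<le> j")
    case True
    then have "m \<le> Sup (Xs l)" "Sup (Xs l) \<le> s" using cl_bounds[OF l] Sup_mono[OF l(1) j1] s_def by auto
    then show False using sr m_def by auto
  next
    case False
    then have "Suc j \<le> l" by auto
    then have "Inf (Xs l) \<le> m" "r \<le> Inf (Xs l)" using cl_bounds[OF l] Inf_mono[OF j2 l(1)] r_def by auto
    then show False using sr m_def by auto
  qed
qed

definition c where "c j = Sup (Xs j)"

lemma c_cl: "j \<in> {1..<N} \<Longrightarrow> c j \<in> closure (Xs j) \<inter> closure (Xs (Suc j))"
proof -
  assume j: "j \<in> {1..<N}"
  have j1: "j \<in> {1..N}" and j2: "Suc j \<in> {1..N}" using j by auto
  show ?thesis unfolding c_def gap[OF j]
    using closure_contains_Sup[OF Xs_ne[OF j1] Xs_bdd(1)[OF j1]] closure_contains_Inf[OF Xs_ne[OF j2] Xs_bdd(2)[OF j2]]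
     gap[OF j] by auto
qed

lemma Inf_lt_Sup: "i \<in> {1..N} \<Longrightarrow> Inf (Xs i) < Sup (Xs i)"
proof -
  assume i: "i \<in> {1..N}"
  obtain a b where "a \<in> Xs i" "b \<in> Xs i" "a < b" using Xs_two[OF i] by blast
  moreover have "Inf (Xs i) \<le> a" using \<open>a \<in> Xs i\<close> cInf_lower Xs_bdd[OF i] by auto
  moreover have "b \<le> Sup (Xs i)" using \<open>b \<in> Xs i\<close> cSup_upper Xs_bdd[OF i] by auto
  ultimately show ?thesis by linarith
qed

lemma c_strict: "j \<in> {1..<N} \<Longrightarrow> k \<in> {1..<N} \<Longrightarrow> j < k \<Longrightarrow> c j < c k"
proof -
  assume j: "j \<in> {1..<N}" and k: "k \<in> {1..<N}" and jk: "j < k"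
  have j2: "Suc j \<in> {1..N}" and k1: "k \<in> {1..N}" using j k jk by auto
  have "c j = Inf (Xs (Suc j))" using gap[OF j] c_def by auto
  also have "\<dots> < Sup (Xs (Suc j))" by (rule Inf_lt_Sup[OF j2])
  also have "\<dots> \<le> c k" unfolding c_def using Sup_mono[OF j2 k1] jk by auto
  finally show ?thesis .
qed

lemma c_mono: "j \<in> {1..<N} \<Longrightarrow> k \<in> {1..<N} \<Longrightarrow> j \<le> k \<Longrightarrow> c j \<le> c k"
  using c_strict by (cases "j = k") (auto simp: less_imp_le)

lemma c_inj: "inj_on c {1..<N}"
proof (rule inj_onI)
  fix j k assume "j \<in> {1..<N}" "k \<in> {1..<N}" "c j = c k"
  then show "j = k" using c_strict[of j k] c_strict[of k j] by (cases j k rule: linorder_cases) auto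
qed

lemma cl_c: "i \<in> {1..<N} \<Longrightarrow> y \<in> closure (Xs i) \<Longrightarrow> y \<in> closure (Xs (Suc i)) \<Longrightarrow> y = c i"
proof -
  assume i: "i \<in> {1..<N}" and y1: "y \<in> closure (Xs i)" and y2: "y \<in> closure (Xs (Suc i))"
  have i1: "i \<in> {1..N}" and i2: "Suc i \<in> {1..N}" using i by auto
  show ?thesis using cl_bounds[OF i1 y1] cl_bounds[OF i2 y2] gap[OF i] c_def by auto
qed

lemma disc_eq: "disc_set N Xs = c ` {1..<N}"
proof
  show "c ` {1..<N} \<subseteq> disc_set N Xs"
  proof
    fix z assume "z \<in> c ` {1..<N}"
    then obtain j where j: "j \<in> {1..<N}" "z = c j" by blast
    then have "j \<in> {1..N}" "Suc j \<in> {1..N}" "j \<noteq> Suc j" by auto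
    then show "z \<in> disc_set N Xs" unfolding disc_set_def using c_cl[OF j(1)] j(2) by blast
  qed
next
  show "disc_set N Xs \<subseteq> c ` {1..<N}"
  proof
    fix z assume "z \<in> disc_set N Xs"
    then obtain i0 k0 where h: "i0 \<in> {1..N}" "k0 \<in> {1..N}" "i0 \<noteq> k0" "z \<in> closure (Xs i0)" "z \<in> closure (Xs k0)"
      unfolding disc_set_def by blast
    obtain i k where ik: "i \<in> {1..N}" "k \<in> {1..N}" "i < k" "z \<in> closure (Xs i)" "z \<in> closure (Xs k)"
    proof (cases "i0 < k0")
      case True then show ?thesis using that[of i0 k0] h by blast
    next
      case False then have "k0 < i0" using h(3) by simp
      then show ?thesis using that[of k0 i0] h by blast
    qed
    have i: "i \<in> {1..<N}" and k: "k - 1 \<in> {1..<N}" using ik by auto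
    have "z \<le> c i" using cl_bounds[OF ik(1) ik(4)] c_def by auto
    moreover have "Inf (Xs k) = c (k - 1)" using gap[OF k] ik c_def by auto
    then have "c (k - 1) \<le> z" using cl_bounds[OF ik(2) ik(5)] by auto
    moreover have "c i \<le> c (k - 1)" using c_mono[OF i k] ik by auto
    ultimately have "z = c i" by auto
    then show "z \<in> c ` {1..<N}" using i by blast
  qed
qed

lemma card_disc: "card (disc_set N Xs) = N - 1"
  using disc_eq card_image[OF c_inj] by simp

lemma between: "j \<in> {1..N} \<Longrightarrow> l \<in> {1..N} \<Longrightarrow> j \<le> m \<Longrightarrow> m < l \<Longrightarrow> y \<in> Xs j \<Longrightarrow> z \<in> Xs l
   \<Longrightarrow> y \<le> c m \<and> c m \<le> z"
proof -
  assume j: "j \<in> {1..N}" and l: "l \<in> {1..N}" and jm: "j \<le> m" and ml: "m < l" and y: "y \<in> Xs j" and z: "z \<in> Xs l"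
  have m: "m \<in> {1..<N}" "m \<in> {1..N}" "Suc m \<in> {1..N}" using j l jm ml by auto
  have "y \<le> Sup (Xs j)" using y cSup_upper Xs_bdd[OF j] by auto
  also have "\<dots> \<le> c m" using Sup_mono[OF j m(2) jm] c_def by auto
  finally have 1: "y \<le> c m" .
  have "c m = Inf (Xs (Suc m))" using gap[OF m(1)] c_def by auto
  also have "\<dots> \<le> Inf (Xs l)" using Inf_mono[OF m(3) l] ml by auto
  also have "\<dots> \<le> z" using z cInf_lower Xs_bdd[OF l] by auto
  finally show ?thesis using 1 by auto
qed


subsection \<open>Atoms\<close>

lemma atom_Nil: "atom X Xs f [] = X" by (simp add: atom_def)

lemma atom_snoc: "atom X Xs f (w @ [i]) = Fmap Xs f i (atom X Xs f w)"
  by (simp add: atom_def)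

lemma atom_closed: "closed (atom X Xs f w)"
  by (induct w rule: rev_induct) (auto simp: atom_Nil atom_snoc Fmap_def X_closed)

lemma atom_sub: "set w \<subseteq> {1..N} \<Longrightarrow> atom X Xs f w \<subseteq> X"
proof (induct w rule: rev_induct)
  case Nil then show ?case by (simp add: atom_Nil)
next
  case (snoc i w)
  then have "atom X Xs f w \<subseteq> X" by auto
  then have "f ` (atom X Xs f w \<inter> Xs i) \<subseteq> X" using fX by auto
  then show ?case by (simp add: atom_snoc Fmap_def closure_minimal X_closed)
qed

lemma atom_int: "set w \<subseteq> {1..N} \<Longrightarrow> is_interval (atom X Xs f w)"
proof (induct w rule: rev_induct)
  case Nil then show ?case by (simp add: atom_Nil X_int)
next
  case (snoc i w)
  then have i: "i \<in> {1..N}" and "is_interval (atom X Xs f w)" by auto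
  then have "is_interval (atom X Xs f w \<inter> Xs i)" using Xs_int[OF i] is_interval_Int by blast
  then have "connected (atom X Xs f w \<inter> Xs i)" using is_interval_connected_1 by blast
  moreover have "continuous_on (atom X Xs f w \<inter> Xs i) f"
    using continuous_on_subset[OF f_cont[OF i]] by blast
  ultimately have "connected (f ` (atom X Xs f w \<inter> Xs i))" using connected_continuous_image by blast
  then have "connected (Fmap Xs f i (atom X Xs f w))"
    unfolding Fmap_def using connected_imp_connected_closure by blast
  then show ?case unfolding atom_snoc is_interval_connected_1 .
qed

lemma closure_diam: "\<forall>y\<in>S. \<forall>z\<in>S. \<bar>y - z\<bar> \<le> (r::real) \<Longrightarrow> \<forall>y\<in>closure S. \<forall>z\<in>closure S. \<bar>y - z\<bar> \<le> r"
proof -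
  assume h: "\<forall>y\<in>S. \<forall>z\<in>S. \<bar>y - z\<bar> \<le> r"
  have 1: "\<forall>y\<in>S. closure S \<subseteq> cball y r"
  proof
    fix y assume "y \<in> S"
    have "S \<subseteq> cball y r"
    proof
      fix z assume "z \<in> S"
      then have "\<bar>y - z\<bar> \<le> r" using h \<open>y \<in> S\<close> by blast
      then show "z \<in> cball y r" by (simp add: dist_real_def)
    qed
    then show "closure S \<subseteq> cball y r" by (simp add: closure_minimal)
  qed
  have 2: "\<forall>z\<in>closure S. closure S \<subseteq> cball z r"
  proof
    fix z assume "z \<in> closure S"
    have "S \<subseteq> cball z r"
    proof
      fix y assume "y \<in> S"
      then have "z \<in> cball y r" using 1 \<open>z \<in> closure S\<close> by blast
      then show "y \<in> cball z r" by (simp add: dist_commute)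
    qed
    then show "closure S \<subseteq> cball z r" by (simp add: closure_minimal)
  qed
  show ?thesis
  proof (intro ballI)
    fix y z assume "y \<in> closure S" "z \<in> closure S"
    then have "y \<in> cball z r" using 2 by blast
    then show "\<bar>y - z\<bar> \<le> r" by (simp add: dist_real_def abs_minus_commute)
  qed
qed

definition D where "D = diameter X"

lemma atom_diam: "set w \<subseteq> {1..N} \<Longrightarrow> \<forall>y\<in>atom X Xs f w. \<forall>z\<in>atom X Xs f w. \<bar>y - z\<bar> \<le> lam ^ length w * D"
proof (induct w rule: rev_induct)
  case Nil
  show ?case using diameter_bounded_bound[OF X_bdd] by (auto simp: atom_Nil D_def dist_real_def)
next
  case (snoc i w)
  then have i: "i \<in> {1..N}" and IH: "\<forall>y\<in>atom X Xs f w. \<forall>z\<in>atom X Xs f w. \<bar>y - z\<bar> \<le> lam ^ length w * D"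
    by auto
  have "\<forall>y\<in>f ` (atom X Xs f w \<inter> Xs i). \<forall>z\<in>f ` (atom X Xs f w \<inter> Xs i). \<bar>y - z\<bar> \<le> lam ^ length (w @ [i]) * D"
  proof (intro ballI)
    fix y z assume "y \<in> f ` (atom X Xs f w \<inter> Xs i)" "z \<in> f ` (atom X Xs f w \<inter> Xs i)"
    then obtain a b where ab: "a \<in> atom X Xs f w" "a \<in> Xs i" "b \<in> atom X Xs f w" "b \<in> Xs i" "y = f a" "z = f b"
      by blast
    have "\<bar>y - z\<bar> \<le> lam * \<bar>a - b\<bar>" using lam(3)[OF i ab(2) ab(4)] ab by simp
    also have "\<dots> \<le> lam * (lam ^ length w * D)" using IH ab lam(1) by (simp add: mult_left_mono)
    finally show "\<bar>y - z\<bar> \<le> lam ^ length (w @ [i]) * D" by simp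
  qed
  then show ?case unfolding atom_snoc Fmap_def by (rule closure_diam)
qed

lemma Fmap_fe: "i \<in> {1..N} \<Longrightarrow> Fmap Xs f i A \<subseteq> fe i ` closure (A \<inter> Xs i)"
proof -
  assume i: "i \<in> {1..N}"
  have cl: "closure (A \<inter> Xs i) \<subseteq> closure (Xs i)" by (simp add: closure_mono)
  have "compact (closure (A \<inter> Xs i))"
  proof -
    have "A \<inter> Xs i \<subseteq> X" using XsX[OF i] by blast
    then have "bounded (A \<inter> Xs i)" using bounded_subset[OF X_bdd] by blast
    then show ?thesis by (simp add: compact_closure)
  qed
  then have "compact (fe i ` closure (A \<inter> Xs i))"
    using compact_continuous_image continuous_on_subset[OF fe_cont[OF i] cl] by blast
  then have c: "closed (fe i ` closure (A \<inter> Xs i))" by (simp add: compact_imp_closed)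
  have "f ` (A \<inter> Xs i) = fe i ` (A \<inter> Xs i)" using fe_eq[OF i] by auto
  also have "\<dots> \<subseteq> fe i ` closure (A \<inter> Xs i)" using closure_subset by blast
  finally show ?thesis unfolding Fmap_def using c by (simp add: closure_minimal)
qed

lemma atom_disj: "length v = length w \<Longrightarrow> set v \<subseteq> {1..N} \<Longrightarrow> set w \<subseteq> {1..N}
   \<Longrightarrow> atom X Xs f v \<inter> atom X Xs f w \<noteq> {} \<Longrightarrow> v = w"
proof (induct v arbitrary: w rule: rev_induct)
  case Nil then show ?case by simp
next
  case (snoc i v)
  obtain w' j where w: "w = w' @ [j]" using snoc.prems(1) by (cases w rule: rev_exhaust) auto
  have i: "i \<in> {1..N}" and j: "j \<in> {1..N}" and sv: "set v \<subseteq> {1..N}" and sw: "set w' \<subseteq> {1..N}"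
    using snoc.prems w by auto
  have len: "length v = length w'" using snoc.prems(1) w by simp
  obtain y where y1: "y \<in> Fmap Xs f i (atom X Xs f v)" and y2: "y \<in> Fmap Xs f j (atom X Xs f w')"
    using snoc.prems(4) w by (auto simp: atom_snoc)
  obtain a where a: "a \<in> closure (atom X Xs f v \<inter> Xs i)" "y = fe i a" using Fmap_fe[OF i] y1 by blast
  obtain b where b: "b \<in> closure (atom X Xs f w' \<inter> Xs j)" "y = fe j b" using Fmap_fe[OF j] y2 by blast
  have acl: "a \<in> closure (Xs i)" using a(1) closure_mono[of "atom X Xs f v \<inter> Xs i" "Xs i"] by blast
  have bcl: "b \<in> closure (Xs j)" using b(1) closure_mono[of "atom X Xs f w' \<inter> Xs j" "Xs j"] by blast
  have ij: "i = j"
  proof (rule ccontr)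
    assume "i \<noteq> j"
    then show False using sep_disj[OF i j] acl bcl a b by blast
  qed
  have ab: "a = b" using sep_inj[OF i] acl bcl a b ij unfolding inj_on_def by blast
  have "a \<in> atom X Xs f v"
    using a(1) closure_mono[of "atom X Xs f v \<inter> Xs i" "atom X Xs f v"] atom_closed closure_closed by blast
  moreover have "b \<in> atom X Xs f w'"
    using b(1) closure_mono[of "atom X Xs f w' \<inter> Xs j" "atom X Xs f w'"] atom_closed closure_closed by blast
  ultimately have "v = w'" using snoc.hyps[OF len sv sw] ab by blast
  then show ?case using w ij by simp
qed

lemma fold_mono: "A \<subseteq> B \<Longrightarrow> foldl (\<lambda>A i. Fmap Xs f i A) A w \<subseteq> foldl (\<lambda>A i. Fmap Xs f i A) B w"
proof (induct w arbitrary: A B)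
  case Nil then show ?case by simp
next
  case (Cons i w)
  have "Fmap Xs f i A \<subseteq> Fmap Xs f i B" using Cons.prems unfolding Fmap_def
    by (meson closure_mono image_mono inf_mono order_refl)
  then show ?case using Cons.hyps by simp
qed

lemma atom_tail: "i \<in> {1..N} \<Longrightarrow> atom X Xs f (i # w) \<subseteq> atom X Xs f w"
proof -
  assume i: "i \<in> {1..N}"
  have "Fmap Xs f i X \<subseteq> X" using atom_sub[of "[i]"] i by (simp add: atom_def)
  then show ?thesis unfolding atom_def using fold_mono by simp
qed

subsection \<open>Words\<close>

definition wd where "wd t n = map (\<lambda>k. \<theta> (t + k)) [0..<n]"

lemma lang_eq: "lang \<theta> n = range (\<lambda>t. wd t n)"
  by (auto simp: lang_def wd_def)

lemma wd_Suc: "wd t (Suc n) = wd t n @ [\<theta> (t + n)]"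
  by (simp add: wd_def)

lemma wd_set: "set (wd t n) \<subseteq> {1..N}"
  using theta_range by (auto simp: wd_def)

lemma wd_len[simp]: "length (wd t n) = n"
  by (simp add: wd_def)

lemma wd_tail: "wd t (Suc n) = \<theta> t # wd (Suc t) n"
  by (rule nth_equalityI) (auto simp: wd_def nth_Cons simp del: upt_Suc split: nat.split)

lemma orbit_atom: "(f ^^ (t + n)) x \<in> atom X Xs f (wd t n)"
proof (induct n)
  case 0 then show ?case using orbit_X by (simp add: wd_def atom_Nil)
next
  case (Suc n)
  have "(f ^^ (t + n)) x \<in> atom X Xs f (wd t n) \<inter> Xs (\<theta> (t + n))" using Suc orbit_Xs by blast
  then have "f ((f ^^ (t + n)) x) \<in> f ` (atom X Xs f (wd t n) \<inter> Xs (\<theta> (t + n)))" by blast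
  then show ?case by (simp add: wd_Suc atom_snoc Fmap_def closure_subset[THEN subsetD])
qed

lemma wd_unique: "(f ^^ (s + n)) x \<in> atom X Xs f (wd t n) \<Longrightarrow> wd s n = wd t n"
  using atom_disj[of "wd s n" "wd t n"] orbit_atom[of s n] wd_set by auto


end

context pcm begin
subsection \<open>Counting\<close>

definition E where "E n u = {i. \<exists>t. wd t n = u \<and> \<theta> (t + n) = i}"

lemma L_finite: "finite (lang \<theta> n)"
proof -
  have "lang \<theta> n \<subseteq> {w. set w \<subseteq> {1..N} \<and> length w = n}" using wd_set by (auto simp: lang_eq)
  then show ?thesis using finite_lists_length_eq[of "{1..N}" n] finite_subset by blast
qed

lemma L_words: "u \<in> lang \<theta> n \<Longrightarrow> set u \<subseteq> {1..N} \<and> length u = n"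
  using wd_set by (auto simp: lang_eq)

lemma E_sub: "E n u \<subseteq> {1..N}" using theta_range by (auto simp: E_def)

lemma E_fin: "finite (E n u)" using E_sub finite_subset by blast

lemma E_ne: "u \<in> lang \<theta> n \<Longrightarrow> E n u \<noteq> {}" by (auto simp: lang_eq E_def)

lemma L_Suc: "lang \<theta> (Suc n) = (\<Union>u\<in>lang \<theta> n. (\<lambda>i. u @ [i]) ` E n u)"
proof (intro equalityI subsetI)
  fix v assume "v \<in> lang \<theta> (Suc n)"
  then obtain t where "v = wd t (Suc n)" by (auto simp: lang_eq)
  then show "v \<in> (\<Union>u\<in>lang \<theta> n. (\<lambda>i. u @ [i]) ` E n u)"
    by (auto simp: lang_eq E_def wd_Suc)
next
  fix v assume "v \<in> (\<Union>u\<in>lang \<theta> n. (\<lambda>i. u @ [i]) ` E n u)"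
  then obtain u i where "v = u @ [i]" "i \<in> E n u" by blast
  then obtain t where "wd t n = u" "\<theta> (t + n) = i" "v = u @ [i]" by (auto simp: E_def)
  then have "v = wd t (Suc n)" by (simp add: wd_Suc)
  then show "v \<in> lang \<theta> (Suc n)" by (simp add: lang_eq)
qed

lemma card_L_Suc: "card (lang \<theta> (Suc n)) = (\<Sum>u\<in>lang \<theta> n. card (E n u))"
proof -
  have "card (\<Union>u\<in>lang \<theta> n. (\<lambda>i. u @ [i]) ` E n u) = (\<Sum>u\<in>lang \<theta> n. card ((\<lambda>i. u @ [i]) ` E n u))"
    by (rule card_UN_disjoint) (auto simp: L_finite E_fin)
  also have "\<dots> = (\<Sum>u\<in>lang \<theta> n. card (E n u))"
    by (rule sum.cong) (auto intro!: card_image inj_onI)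
  finally show ?thesis by (simp add: L_Suc)
qed

lemma E_visit: "i \<in> E n u \<Longrightarrow> \<exists>t. wd t n = u \<and> (f ^^ (t + n)) x \<in> Xs i \<and> (f ^^ (t + n)) x \<in> atom X Xs f u"
  unfolding E_def using orbit_Xs orbit_atom by blast

lemma atom_conv: "set u \<subseteq> {1..N} \<Longrightarrow> y \<in> atom X Xs f u \<Longrightarrow> z \<in> atom X Xs f u \<Longrightarrow> y \<le> w \<Longrightarrow> w \<le> z
   \<Longrightarrow> w \<in> atom X Xs f u"
  using atom_int unfolding is_interval_1 by blast

lemma below_Max: "u \<in> lang \<theta> n \<Longrightarrow> j \<in> E n u \<Longrightarrow> j < Max (E n u) \<Longrightarrow> j \<in> {1..<N} \<and> c j \<in> atom X Xs f u"
proof -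
  assume u: "u \<in> lang \<theta> n" and j: "j \<in> E n u" and jM: "j < Max (E n u)"
  have M: "Max (E n u) \<in> E n u" using E_fin E_ne[OF u] by simp
  have j1: "j \<in> {1..N}" and M1: "Max (E n u) \<in> {1..N}" using E_sub[of n u] j M by auto
  obtain t where t: "(f ^^ (t + n)) x \<in> Xs j" "(f ^^ (t + n)) x \<in> atom X Xs f u" using E_visit[OF j] by blast
  obtain t' where t': "(f ^^ (t' + n)) x \<in> Xs (Max (E n u))" "(f ^^ (t' + n)) x \<in> atom X Xs f u"
    using E_visit[OF M] by blast
  have "(f ^^ (t + n)) x \<le> c j \<and> c j \<le> (f ^^ (t' + n)) x" using between[OF j1 M1 _ jM t(1) t'(1)] by simp
  then have "c j \<in> atom X Xs f u" using atom_conv[OF _ t(2) t'(2)] L_words[OF u] by blast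
  then show ?thesis using j1 M1 jM by auto
qed

definition C where "C u = {j \<in> {1..<N}. c j \<in> atom X Xs f u}"

lemma C_disj: "u \<in> lang \<theta> n \<Longrightarrow> u' \<in> lang \<theta> n \<Longrightarrow> u \<noteq> u' \<Longrightarrow> C u \<inter> C u' = {}"
  using atom_disj[of u u'] L_words unfolding C_def by auto

definition sn where "sn n = (\<Sum>u\<in>lang \<theta> n. card (E n u - {Max (E n u)}))"

lemma sn_upper: "sn n \<le> N - 1"
proof -
  have "sn n \<le> (\<Sum>u\<in>lang \<theta> n. card (C u))"
    unfolding sn_def
  proof (rule sum_mono)
    fix u assume u: "u \<in> lang \<theta> n"
    have "E n u - {Max (E n u)} \<subseteq> C u"
    proof
      fix j assume "j \<in> E n u - {Max (E n u)}"
      then have "j \<in> E n u" "j < Max (E n u)" using E_fin by (auto simp: order_le_neq_trans)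
      then show "j \<in> C u" using below_Max[OF u] C_def by auto
    qed
    then show "card (E n u - {Max (E n u)}) \<le> card (C u)" by (rule card_mono[rotated]) (simp add: C_def)
  qed
  also have "\<dots> = card (\<Union>u\<in>lang \<theta> n. C u)"
    apply (rule card_UN_disjoint[symmetric])
    using L_finite apply simp
     apply (simp add: C_def)
    using C_disj by blast
  also have "\<dots> \<le> card {1..<N}" by (rule card_mono) (auto simp: C_def)
  finally show ?thesis by simp
qed

lemma card_L_Suc2: "card (lang \<theta> (Suc n)) = card (lang \<theta> n) + sn n"
proof -
  have "\<forall>u\<in>lang \<theta> n. card (E n u) = card (E n u - {Max (E n u)}) + 1"
  proof
    fix u assume u: "u \<in> lang \<theta> n"
    have "Max (E n u) \<in> E n u" using E_fin E_ne[OF u] by simp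
    then show "card (E n u) = card (E n u - {Max (E n u)}) + 1"
      using card_Suc_Diff1[OF E_fin] by simp
  qed
  then have "card (lang \<theta> (Suc n)) = (\<Sum>u\<in>lang \<theta> n. card (E n u - {Max (E n u)}) + 1)"
    using card_L_Suc by simp
  also have "\<dots> = sn n + card (lang \<theta> n)" unfolding sn_def sum.distrib by simp
  finally show ?thesis by simp
qed

definition J where "J n u = {j \<in> {1..<N}. j \<in> E n u \<and> Suc j \<in> E n u \<and> c j \<in> atom X Xs f u}"

lemma atoms_of_eq: "A \<in> atoms_of X N Xs f n x \<Longrightarrow> (f ^^ (t + n)) x \<in> A \<Longrightarrow> A = atom X Xs f (wd t n)"
proof -
  assume A: "A \<in> atoms_of X N Xs f n x" and t: "(f ^^ (t + n)) x \<in> A"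
  then obtain w where w: "A = atom X Xs f w" "length w = n" "set w \<subseteq> {1..N}"
    unfolding atoms_of_def atoms_def by blast
  have "wd t n = w"
    using atom_disj[of "wd t n" w] orbit_atom[of t n] wd_set w t by auto
  then show ?thesis using w by simp
qed

lemma atom_in_atoms_of: "atom X Xs f (wd t n) \<in> atoms_of X N Xs f n x"
proof -
  have "(f ^^ (t + n)) x \<in> atom X Xs f (wd t n)" by (rule orbit_atom)
  then show ?thesis unfolding atoms_of_def atoms_def using wd_set[of t n] by auto
qed

lemma D_eq: "Delta_lr_n X N Xs f n x = c ` (\<Union>u\<in>lang \<theta> n. J n u)"
proof (intro equalityI subsetI)
  fix z assume "z \<in> Delta_lr_n X N Xs f n x"
  then obtain i A t t' where h: "1 \<le> i" "i < N" "z \<in> closure (Xs i)" "z \<in> closure (Xs (Suc i))"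
    "A \<in> atoms_of X N Xs f n x" "z \<in> A" "(f ^^ (t + n)) x \<in> A" "(f ^^ (t + n)) x \<in> Xs i"
    "(f ^^ (t' + n)) x \<in> A" "(f ^^ (t' + n)) x \<in> Xs (Suc i)"
    unfolding Delta_lr_n_def by blast
  have A: "A = atom X Xs f (wd t n)" using atoms_of_eq[OF h(5) h(7)] .
  have t': "wd t' n = wd t n" using wd_unique h(9) A by simp
  have i1: "i \<in> {1..N}" and i2: "Suc i \<in> {1..N}" and i3: "i \<in> {1..<N}" using h by auto
  have "\<theta> (t + n) = i" using theta_iff[OF i1] h(8) by blast
  then have "i \<in> E n (wd t n)" unfolding E_def by blast
  moreover have "\<theta> (t' + n) = Suc i" using theta_iff[OF i2] h(10) by blast
  then have "Suc i \<in> E n (wd t n)" unfolding E_def using t' by blast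
  moreover have "z = c i" using cl_c[OF i3 h(3) h(4)] .
  ultimately have "i \<in> J n (wd t n)" "z = c i" using i3 h(6) A unfolding J_def by auto
  moreover have "wd t n \<in> lang \<theta> n" by (simp add: lang_eq)
  ultimately show "z \<in> c ` (\<Union>u\<in>lang \<theta> n. J n u)" by blast
next
  fix z assume "z \<in> c ` (\<Union>u\<in>lang \<theta> n. J n u)"
  then obtain j u where h: "u \<in> lang \<theta> n" "j \<in> J n u" "z = c j" by blast
  obtain s where s: "u = wd s n" using h(1) by (auto simp: lang_eq)
  have j: "j \<in> {1..<N}" "j \<in> E n u" "Suc j \<in> E n u" "c j \<in> atom X Xs f u" using h(2) unfolding J_def by auto
  have d: "c j \<in> disc_set N Xs" using disc_eq j(1) by auto
  obtain t where t: "(f ^^ (t + n)) x \<in> Xs j" "(f ^^ (t + n)) x \<in> atom X Xs f u" using E_visit[OF j(2)] by blast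
  obtain t' where t': "(f ^^ (t' + n)) x \<in> Xs (Suc j)" "(f ^^ (t' + n)) x \<in> atom X Xs f u"
    using E_visit[OF j(3)] by blast
  have A: "atom X Xs f u \<in> atoms_of X N Xs f n x" using atom_in_atoms_of s by simp
  have "1 \<le> j" "j < N" using j(1) by auto
  then show "z \<in> Delta_lr_n X N Xs f n x" unfolding Delta_lr_n_def
    using d c_cl[OF j(1)] A j(4) t t' h(3) by blast
qed

lemma J_sub_C: "J n u \<subseteq> C u" unfolding J_def C_def by auto

lemma card_D: "card (Delta_lr_n X N Xs f n x) = (\<Sum>u\<in>lang \<theta> n. card (J n u))"
proof -
  have sub: "(\<Union>u\<in>lang \<theta> n. J n u) \<subseteq> {1..<N}" unfolding J_def by auto
  have "card (Delta_lr_n X N Xs f n x) = card (\<Union>u\<in>lang \<theta> n. J n u)"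
    unfolding D_eq by (rule card_image[OF inj_on_subset[OF c_inj sub]])
  also have "\<dots> = (\<Sum>u\<in>lang \<theta> n. card (J n u))"
    apply (rule card_UN_disjoint)
    using L_finite apply simp
     apply (simp add: J_def)
    using C_disj J_sub_C by blast
  finally show ?thesis .
qed

lemma J_le: "card (J n u) \<le> card (E n u - {Max (E n u)})"
proof (rule card_mono)
  show "finite (E n u - {Max (E n u)})" using E_fin by simp
  show "J n u \<subseteq> E n u - {Max (E n u)}"
  proof
    fix j assume "j \<in> J n u"
    then have "j \<in> E n u" "Suc j \<in> E n u" unfolding J_def by auto
    then have "Suc j \<le> Max (E n u)" using E_fin by simp
    then show "j \<in> E n u - {Max (E n u)}" using \<open>j \<in> E n u\<close> by auto
  qed
qed

lemma D_le_sn: "card (Delta_lr_n X N Xs f n x) \<le> sn n"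
  unfolding card_D sn_def by (rule sum_mono) (rule J_le)

definition small where "small n \<longleftrightarrow> (\<forall>k\<in>{1..N}. \<exists>a b. a \<in> Xs k \<and> b \<in> Xs k \<and> lam ^ n * D < b - a)"

lemma eventually_small: "\<exists>n1. \<forall>n\<ge>n1. small n"
proof -
  have lim: "(\<lambda>n. lam ^ n * D) \<longlonglongrightarrow> 0"
    by (intro tendsto_mult_left_zero LIMSEQ_power_zero) (use lam in auto)
  have "\<forall>k\<in>{1..N}. eventually (\<lambda>n. \<exists>a b. a \<in> Xs k \<and> b \<in> Xs k \<and> lam ^ n * D < b - a) sequentially"
  proof
    fix k assume k: "k \<in> {1..N}"
    obtain a b where ab: "a \<in> Xs k" "b \<in> Xs k" "a < b" using Xs_two[OF k] by blast
    have "eventually (\<lambda>n. lam ^ n * D < b - a) sequentially"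
      using order_tendstoD(2)[OF lim, of "b - a"] ab(3) by simp
    then show "eventually (\<lambda>n. \<exists>a b. a \<in> Xs k \<and> b \<in> Xs k \<and> lam ^ n * D < b - a) sequentially"
      by (rule eventually_mono) (use ab in blast)
  qed
  then have "eventually (\<lambda>n. \<forall>k\<in>{1..N}. \<exists>a b. a \<in> Xs k \<and> b \<in> Xs k \<and> lam ^ n * D < b - a) sequentially"
    by (rule eventually_ball_finite[rotated]) simp
  then show ?thesis unfolding small_def eventually_sequentially by blast
qed

lemma large_adj: "small n \<Longrightarrow> u \<in> lang \<theta> n \<Longrightarrow> i \<in> E n u \<Longrightarrow> l \<in> E n u \<Longrightarrow> i < l \<Longrightarrow> l = Suc i"
proof (rule ccontr)
  assume sm: "small n" and u: "u \<in> lang \<theta> n" and i: "i \<in> E n u" and l: "l \<in> E n u" and il: "i < l"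
    and ne: "l \<noteq> Suc i"
  have i1: "i \<in> {1..N}" and l1: "l \<in> {1..N}" using E_sub[of n u] i l by auto
  have k: "Suc i \<in> {1..N}" "i < Suc i" "Suc i < l" using i1 l1 il ne by auto
  obtain a b where ab: "a \<in> Xs (Suc i)" "b \<in> Xs (Suc i)" "lam ^ n * D < b - a"
    using sm k(1) unfolding small_def by blast
  obtain t where t: "(f ^^ (t + n)) x \<in> Xs i" "(f ^^ (t + n)) x \<in> atom X Xs f u" using E_visit[OF i] by blast
  obtain t' where t': "(f ^^ (t' + n)) x \<in> Xs l" "(f ^^ (t' + n)) x \<in> atom X Xs f u" using E_visit[OF l] by blast
  have w: "set u \<subseteq> {1..N}" "length u = n" using L_words[OF u] by auto
  have "(f ^^ (t + n)) x < a" "a < (f ^^ (t' + n)) x" "(f ^^ (t + n)) x < b" "b < (f ^^ (t' + n)) x"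
    using Xs_ord[OF i1 k(1) k(2)] Xs_ord[OF k(1) l1 k(3)] t t' ab by blast+
  then have "a \<in> atom X Xs f u" "b \<in> atom X Xs f u"
    using atom_conv[OF w(1) t(2) t'(2)] by (meson less_imp_le)+
  then have "\<bar>a - b\<bar> \<le> lam ^ n * D" using atom_diam[OF w(1)] w(2) by blast
  then show False using ab(3) by linarith
qed

lemma sn_le_D: "small n \<Longrightarrow> sn n \<le> card (Delta_lr_n X N Xs f n x)"
  unfolding card_D sn_def
proof (rule sum_mono)
  fix u assume sm: "small n" and u: "u \<in> lang \<theta> n"
  show "card (E n u - {Max (E n u)}) \<le> card (J n u)"
  proof (rule card_mono)
    show "finite (J n u)" unfolding J_def by simp
    show "E n u - {Max (E n u)} \<subseteq> J n u"
    proof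
      fix j assume j: "j \<in> E n u - {Max (E n u)}"
      have M: "Max (E n u) \<in> E n u" using E_fin E_ne[OF u] by simp
      have jM: "j < Max (E n u)" using j E_fin by (simp add: order_le_neq_trans)
      then have "Max (E n u) = Suc j" using large_adj[OF sm u _ M] j by blast
      then have "Suc j \<in> E n u" using M by simp
      then show "j \<in> J n u" using below_Max[OF u _ jM] j unfolding J_def by auto
    qed
  qed
qed

lemma D_mono: "Delta_lr_n X N Xs f (Suc n) x \<subseteq> Delta_lr_n X N Xs f n x"
proof
  fix z assume "z \<in> Delta_lr_n X N Xs f (Suc n) x"
  then obtain i A t t' where h: "z \<in> disc_set N Xs" "1 \<le> i" "i < N" "z \<in> closure (Xs i) \<inter> closure (Xs (Suc i))"
    "A \<in> atoms_of X N Xs f (Suc n) x" "z \<in> A" "(f ^^ (t + Suc n)) x \<in> A \<inter> Xs i"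
    "(f ^^ (t' + Suc n)) x \<in> A \<inter> Xs (Suc i)"
    unfolding Delta_lr_n_def by blast
  have "A = atom X Xs f (wd t (Suc n))" using atoms_of_eq[OF h(5)] h(7) by blast
  also have "\<dots> \<subseteq> atom X Xs f (wd (Suc t) n)" unfolding wd_tail by (rule atom_tail[OF theta_range])
  finally have sub: "A \<subseteq> atom X Xs f (wd (Suc t) n)" .
  have A': "atom X Xs f (wd (Suc t) n) \<in> atoms_of X N Xs f n x" by (rule atom_in_atoms_of)
  have e: "t + Suc n = Suc t + n" "t' + Suc n = Suc t' + n" by simp_all
  have "(f ^^ (Suc t + n)) x \<in> atom X Xs f (wd (Suc t) n) \<inter> Xs i"
    "(f ^^ (Suc t' + n)) x \<in> atom X Xs f (wd (Suc t) n) \<inter> Xs (Suc i)"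
    using h(7) h(8) sub unfolding e by blast+
  then show "z \<in> Delta_lr_n X N Xs f n x"
    unfolding Delta_lr_n_def using h(1-4,6) sub A' by blast
qed


lemma D_antimono: "m \<le> n \<Longrightarrow> Delta_lr_n X N Xs f n x \<subseteq> Delta_lr_n X N Xs f m x"
proof (induct n rule: dec_induct)
  case base then show ?case by simp
next
  case (step n) then show ?case using D_mono[of n] by blast
qed

lemma D_sub: "Delta_lr_n X N Xs f n x \<subseteq> disc_set N Xs"
  unfolding Delta_lr_n_def by blast

lemma disc_fin: "finite (disc_set N Xs)" using disc_eq by simp

lemma D_fin: "finite (Delta_lr_n X N Xs f n x)" using D_sub disc_fin finite_subset by blast

theorem main:
  "\<exists>m0::nat. m0 \<ge> 1 \<and> (\<exists>\<beta>::int.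
           (\<forall>n\<ge>m0. int (complexity \<theta> n) = int n * int (card (Delta_lr X N Xs f x)) + \<beta>) \<and>
           int (complexity \<theta> 1) - int (card (Delta_lr X N Xs f x)) \<le> \<beta> \<and>
           \<beta> \<le> int (complexity \<theta> 1) - int (card (disc_set N Xs))
                + int m0 * (int (card (disc_set N Xs)) - int (card (Delta_lr X N Xs f x))))"
proof -
  define Dn where "Dn n = Delta_lr_n X N Xs f n x" for n
  define p where "p n = card (lang \<theta> n)" for n
  have pc: "complexity \<theta> n = p n" for n by (simp add: complexity_def p_def)
  have F1: "p (Suc n) = p n + sn n" for n using card_L_Suc2 p_def by simp
  have F2: "card (Dn n) \<le> sn n" "sn n \<le> N - 1" for n using D_le_sn sn_upper Dn_def by auto
  obtain n1 where n1: "\<forall>n\<ge>n1. small n" using eventually_small by blast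
  have F3: "n \<ge> n1 \<Longrightarrow> sn n = card (Dn n)" for n using n1 sn_le_D F2(1) by (simp add: Dn_def le_antisym)
  obtain n2 where n2: "1 \<le> n2" "\<forall>y. 1 \<le> y \<longrightarrow> card (Dn n2) \<le> card (Dn y)"
    using ex_has_least_nat[of "\<lambda>n. 1 \<le> n" 1 "\<lambda>n. card (Dn n)"] by auto
  have stab: "n \<ge> n2 \<Longrightarrow> Dn n = Dn n2" for n
  proof -
    assume "n \<ge> n2"
    then have "Dn n \<subseteq> Dn n2" unfolding Dn_def by (rule D_antimono)
    moreover have "card (Dn n2) \<le> card (Dn n)" using n2 \<open>n \<ge> n2\<close> by simp
    ultimately show ?thesis using card_seteq[OF D_fin] Dn_def by simp
  qed
  have lr: "Delta_lr X N Xs f x = Dn n2"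
  proof
    show "Delta_lr X N Xs f x \<subseteq> Dn n2" unfolding Delta_lr_def Dn_def using n2(1) by auto
    show "Dn n2 \<subseteq> Delta_lr X N Xs f x"
    proof
      fix z assume z: "z \<in> Dn n2"
      have "z \<in> Dn n" if "n \<ge> 1" for n
      proof (cases "n \<le> n2")
        case True
        then have "Dn n2 \<subseteq> Dn n" unfolding Dn_def by (rule D_antimono)
        then show ?thesis using z by blast
      next
        case False
        then have "n2 \<le> n" by simp
        then have "Dn n = Dn n2" by (rule stab)
        then show ?thesis using z by simp
      qed
      then show "z \<in> Delta_lr X N Xs f x" unfolding Delta_lr_def Dn_def by auto
    qed
  qed
  define d where "d = card (Delta_lr X N Xs f x)"
  have dle: "n \<ge> 1 \<Longrightarrow> d \<le> card (Dn n)" for n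
  proof -
    assume "n \<ge> 1"
    then have "Delta_lr X N Xs f x \<subseteq> Dn n" unfolding Delta_lr_def Dn_def by auto
    moreover have "finite (Dn n)" unfolding Dn_def by (rule D_fin)
    ultimately show ?thesis unfolding d_def by (simp add: card_mono)
  qed
  define m0 where "m0 = max n1 n2"
  have m01: "m0 \<ge> 1" using n2 m0_def by simp
  have snd: "n \<ge> m0 \<Longrightarrow> sn n = d" for n
    using F3[of n] stab[of n] lr d_def m0_def by simp
  have aff: "n \<ge> m0 \<Longrightarrow> p n = p m0 + (n - m0) * d" for n
  proof (induct n rule: dec_induct)
    case base then show ?case by simp
  next
    case (step n)
    then show ?case using F1[of n] snd[of n] by (simp add: Suc_diff_le)
  qed
  have bnd: "n \<ge> 1 \<Longrightarrow> p 1 + (n - 1) * d \<le> p n \<and> p n \<le> p 1 + (n - 1) * (N - 1)" for n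
  proof (induct n rule: dec_induct)
    case base then show ?case by simp
  next
    case (step n)
    have "d \<le> sn n" using dle[of n] F2(1)[of n] step(1) by simp
    moreover have "sn n \<le> N - 1" using F2(2) .
    moreover have e1: "(Suc n - 1) * d = (n - 1) * d + d" using step(1) by (cases n) auto
    moreover have e2: "(Suc n - 1) * (N - 1) = (n - 1) * (N - 1) + (N - 1)" using step(1) by (cases n) auto
    moreover have "p 1 + (n - 1) * d \<le> p n" "p n \<le> p 1 + (n - 1) * (N - 1)" using step(3) by auto
    ultimately show ?case unfolding F1[of n] by linarith
  qed
  define \<beta> where "\<beta> = int (p m0) - int m0 * int d"
  have e1: "\<forall>n\<ge>m0. int (p n) = int n * int d + \<beta>"
  proof (intro allI impI)
    fix n assume "n \<ge> m0"
    then have "int (p n) = int (p m0) + (int n - int m0) * int d" using aff[of n] by (simp add: of_nat_diff)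
    then show "int (p n) = int n * int d + \<beta>" unfolding \<beta>_def by (simp add: algebra_simps)
  qed
  have b1: "int (p 1) + (int m0 - 1) * int d \<le> int (p m0)"
  proof -
    have "p 1 + (m0 - 1) * d \<le> p m0" using bnd[OF m01] by simp
    then have "int (p 1 + (m0 - 1) * d) \<le> int (p m0)" by (simp only: of_nat_le_iff)
    then have "int (p 1) + int (m0 - 1) * int d \<le> int (p m0)" by (simp only: of_nat_add of_nat_mult)
    then show ?thesis using m01 by (simp add: of_nat_diff)
  qed
  have b2: "int (p m0) \<le> int (p 1) + (int m0 - 1) * (int N - 1)"
  proof -
    have "p m0 \<le> p 1 + (m0 - 1) * (N - 1)" using bnd[OF m01] by simp
    then have "int (p m0) \<le> int (p 1 + (m0 - 1) * (N - 1))" by (simp only: of_nat_le_iff)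
    then have "int (p m0) \<le> int (p 1) + int (m0 - 1) * int (N - 1)" by (simp only: of_nat_add of_nat_mult)
    then show ?thesis using m01 N2 by (simp add: of_nat_diff)
  qed
  have cd: "int (card (disc_set N Xs)) = int N - 1" using card_disc N2 by (simp add: of_nat_diff)
  show ?thesis
  proof (intro exI conjI)
    show "1 \<le> m0" by (rule m01)
    show "\<forall>n\<ge>m0. int (complexity \<theta> n) = int n * int (card (Delta_lr X N Xs f x)) + \<beta>"
      using e1 pc d_def by simp
    show "int (complexity \<theta> 1) - int (card (Delta_lr X N Xs f x)) \<le> \<beta>"
      using b1 pc d_def \<beta>_def by (simp add: algebra_simps)
    show "\<beta> \<le> int (complexity \<theta> 1) - int (card (disc_set N Xs))
                + int m0 * (int (card (disc_set N Xs)) - int (card (Delta_lr X N Xs f x)))"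
    proof -
      have x1: "(int m0 - 1) * (int N - 1) = int m0 * int N - int m0 - int N + 1" by (simp add: algebra_simps)
      have x2: "int m0 * (int (card (disc_set N Xs)) - int d) = int m0 * int N - int m0 - int m0 * int d"
        unfolding cd by (simp add: algebra_simps)
      show ?thesis unfolding pc d_def[symmetric] using b2 x1 x2 cd \<beta>_def by linarith
    qed
  qed
qed


end

theorem theorem2:
  fixes X :: "real set" and N :: nat and Xs :: "nat \<Rightarrow> real set"
    and f :: "real \<Rightarrow> real" and fe :: "nat \<Rightarrow> real \<Rightarrow> real"
    and x :: real and \<theta> :: "nat \<Rightarrow> nat"
  assumes "pc_interval_map X N Xs f fe"
    and "pc_discontinuous X N Xs f"
    and "separation_property N Xs fe"
    and "x \<in> Xtilde X N Xs f"
    and "is_itinerary N Xs f x \<theta>"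
  shows "\<exists>m0::nat. m0 \<ge> 1 \<and> (\<exists>\<beta>::int.
           (\<forall>n\<ge>m0. int (complexity \<theta> n) = int n * int (card (Delta_lr X N Xs f x)) + \<beta>) \<and>
           int (complexity \<theta> 1) - int (card (Delta_lr X N Xs f x)) \<le> \<beta> \<and>
           \<beta> \<le> int (complexity \<theta> 1) - int (card (disc_set N Xs))
                + int m0 * (int (card (disc_set N Xs)) - int (card (Delta_lr X N Xs f x))))"
proof -
  have "pcm X N Xs f fe x \<theta>" unfolding pcm_def using assms(1,3,4,5) by blast
  then show ?thesis by (rule pcm.main)
qed

end
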